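(* Let $n\ge2$, $\beta\in\partial\mathbb{D}$, $\{\alpha_j\}_{j=0}^{n-2}\in\mathbb{D}^{n-1}$, and $\rho_0=(1-|\alpha_0|^2)^{1/2}$. Let $C_n,S_n$ be built from $(\{\alpha_j\}_{j=0}^{n-2},\beta)$ and $C_{n-1},S_{n-1}$ from $(\{\alpha_{j+1}\}_{j=0}^{n-3},\beta)$, and define for $m\in\{n-1,n\}$ \[ G_m(z,w)=-i\,\frac{C_m(z)\,wS_m(w)-C_m(w)\,zS_m(z)}{z-w}. \] Then \[ G_n(z,w)=z\rho_0^2G_{n-1}(z,w)-i\rho_0^2\,zS_{n-1}(z)C_{n-1}(w). \]
   Context: For Verblunsky coefficients in $\mathbb{D}$, $\Phi_0=1$, $\Phi_{k+1}(z)=z\Phi_k(z)-\bar\alpha_k\Phi_k^*(z)$ with $\Phi_k^*(z)=z^k\overline{\Phi_k(1/\bar z)}$; $\Psi_k$ satisfies the same recursion with $\alpha_j$ replaced by $-\alpha_j$. For $m\ge1$, $P_m(z;\{\alpha_j\}_{j=0}^{m-2},\beta)=z\Phi_{m-1}(z)-\bar\beta\Phi_{m-1}^*(z)$, $Q_m(z;\{\alpha_j\}_{j=0}^{m-2},\beta)=z\Psi_{m-1}(z)+\bar\beta\Psi_{m-1}^*(z)$, $C_m=\tfrac12(P_m+Q_m)$, $S_m=\tfrac12(P_m-Q_m)$. The identity is an identity of polynomials in $z,w$. *)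

theory Defs
  imports "HOL-Analysis.Analysis" "HOL-Computational_Algebra.Polynomial"
begin

text \<open>Reversed polynomial of degree (at most) k: z^k * conj(p(1/conj z)).\<close>
definition pstar :: "nat \<Rightarrow> complex poly \<Rightarrow> complex poly" where
  "pstar k p = (\<Sum>i\<le>k. monom (cnj (coeff p (k - i))) i)"

text \<open>Monic orthogonal polynomials via the Szego recursion.\<close>
fun Phi :: "(nat \<Rightarrow> complex) \<Rightarrow> nat \<Rightarrow> complex poly" where
  "Phi a 0 = 1"
| "Phi a (Suc k) = pCons 0 (Phi a k) - smult (cnj (a k)) (pstar k (Phi a k))"

definition Psi :: "(nat \<Rightarrow> complex) \<Rightarrow> nat \<Rightarrow> complex poly" where
  "Psi a k = Phi (\<lambda>j. - a j) k"

definition Pm :: "nat \<Rightarrow> (nat \<Rightarrow> complex) \<Rightarrow> complex \<Rightarrow> complex poly" where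
  "Pm m a \<beta> = pCons 0 (Phi a (m - 1)) - smult (cnj \<beta>) (pstar (m - 1) (Phi a (m - 1)))"

definition Qm :: "nat \<Rightarrow> (nat \<Rightarrow> complex) \<Rightarrow> complex \<Rightarrow> complex poly" where
  "Qm m a \<beta> = pCons 0 (Psi a (m - 1)) + smult (cnj \<beta>) (pstar (m - 1) (Psi a (m - 1)))"

definition Cm :: "nat \<Rightarrow> (nat \<Rightarrow> complex) \<Rightarrow> complex \<Rightarrow> complex poly" where
  "Cm m a \<beta> = smult (1/2) (Pm m a \<beta> + Qm m a \<beta>)"

definition Sm :: "nat \<Rightarrow> (nat \<Rightarrow> complex) \<Rightarrow> complex \<Rightarrow> complex poly" where
  "Sm m a \<beta> = smult (1/2) (Pm m a \<beta> - Qm m a \<beta>)"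

definition Gm :: "nat \<Rightarrow> (nat \<Rightarrow> complex) \<Rightarrow> complex \<Rightarrow> complex \<Rightarrow> complex \<Rightarrow> complex" where
  "Gm m a \<beta> z w = - \<i> * (poly (Cm m a \<beta>) z * w * poly (Sm m a \<beta>) w
                          - poly (Cm m a \<beta>) w * z * poly (Sm m a \<beta>) z) / (z - w)"

end

theory Submission
  imports Defs
begin

lemma coeff_pstar: "coeff (pstar k p) i = (if i \<le> k then cnj (coeff p (k - i)) else 0)"
  by (simp add: pstar_def coeff_sum coeff_monom)

lemma degree_Phi: "degree (Phi a k) \<le> k"
proof (induction k)
  case 0 then show ?case by simp
next
  case (Suc k)
  have d1: "degree (pCons 0 (Phi a k)) \<le> Suc k"
    using Suc by (metis degree_pCons_le le_SucI not_less_eq_eq order_trans)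
  have d2: "degree (pstar k (Phi a k)) \<le> Suc k"
    by (rule degree_le) (auto simp: coeff_pstar)
  show ?case using d1 d2
    by (simp add: degree_diff_le degree_smult_le order_trans)
qed

lemma pstar_Suc:
  assumes "degree p \<le> k"
  shows "pstar (Suc k) (pCons 0 p - smult (cnj c) (pstar k p))
         = pstar k p - smult c (pCons 0 p)"
proof (rule poly_eqI)
  fix i
  show "coeff (pstar (Suc k) (pCons 0 p - smult (cnj c) (pstar k p))) i =
        coeff (pstar k p - smult c (pCons 0 p)) i"
  proof (cases "i \<le> Suc k")
    case True
    then show ?thesis
      apply (cases i)
       apply (auto simp: coeff_pstar coeff_pCons Suc_diff_le split: nat.splits)
      apply (rule arg_cong[where f="coeff p"])
      by arith
  next
    case False
    then have "coeff p (i - 1) = 0" using assms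
      by (intro coeff_eq_0) auto
    with False show ?thesis
      by (cases i) (auto simp: coeff_pstar coeff_pCons)
  qed
qed

definition step :: "complex \<Rightarrow> complex \<Rightarrow> complex \<times> complex \<Rightarrow> complex \<times> complex" where
  "step c z s = (z * fst s - cnj c * snd s, snd s - c * z * fst s)"

fun F :: "(nat \<Rightarrow> complex) \<Rightarrow> nat \<Rightarrow> complex \<Rightarrow> complex \<times> complex \<Rightarrow> complex \<times> complex" where
  "F a 0 z s = s"
| "F a (Suc k) z s = step (a k) z (F a k z s)"

lemma PhiF: "poly (Phi a k) z = fst (F a k z (1,1)) \<and> poly (pstar k (Phi a k)) z = snd (F a k z (1,1))"
proof (induction k)
  case 0 then show ?case by (simp add: pstar_def)
next
  case (Suc k)
  have "pstar (Suc k) (Phi a (Suc k)) = pstar k (Phi a k) - smult (a k) (pCons 0 (Phi a k))"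
    using pstar_Suc[OF degree_Phi] by simp
  then show ?case using Suc by (simp add: step_def)
qed

lemma negF: "F (\<lambda>j. - a j) k z (u,v) = (fst (F a k z (u,-v)), - snd (F a k z (u,-v)))"
  by (induction k) (auto simp: step_def)

lemma linF: "F a k z (u,v) = (u * fst (F a k z (1,0)) + v * fst (F a k z (0,1)),
                              u * snd (F a k z (1,0)) + v * snd (F a k z (0,1)))"
  by (induction k) (auto simp: step_def algebra_simps)

lemma shiftF: "F a (Suc k) z s = F (\<lambda>j. a (Suc j)) k z (step (a 0) z s)"
  by (induction k) auto

definition cc where "cc b k \<beta> z = fst (step \<beta> z (F b k z (1,0)))"
definition ss where "ss b k \<beta> z = fst (step \<beta> z (F b k z (0,1)))"

lemma linstep: "fst (step \<beta> z (F b k z (u,v))) = u * cc b k \<beta> z + v * ss b k \<beta> z"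
  unfolding cc_def ss_def step_def
  by (simp add: linF[of b k z u v] algebra_simps)

lemma Cm_eval: "poly (Cm (Suc k) b \<beta>) z = cc b k \<beta> z"
  and Sm_eval: "poly (Sm (Suc k) b \<beta>) z = ss b k \<beta> z"
proof -
  have P: "poly (Pm (Suc k) b \<beta>) z = cc b k \<beta> z + ss b k \<beta> z"
    using PhiF[of b k z] linstep[of \<beta> z b k 1 1]
    by (simp add: Pm_def step_def)
  have Q: "poly (Qm (Suc k) b \<beta>) z = cc b k \<beta> z - ss b k \<beta> z"
    using PhiF[of "\<lambda>j. - b j" k z] linstep[of \<beta> z b k 1 "-1"] negF[of b k z 1 1]
    by (simp add: Qm_def Psi_def step_def)
  show "poly (Cm (Suc k) b \<beta>) z = cc b k \<beta> z" using P Q by (simp add: Cm_def field_simps)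
  show "poly (Sm (Suc k) b \<beta>) z = ss b k \<beta> z" using P Q by (simp add: Sm_def field_simps)
qed

lemma cc_shift: "cc a (Suc k) \<beta> z = z * cc (\<lambda>j. a (Suc j)) k \<beta> z - a 0 * z * ss (\<lambda>j. a (Suc j)) k \<beta> z"
proof -
  have "step (a 0) z (1,0) = (z, - (a 0 * z))" by (simp add: step_def)
  then show ?thesis unfolding cc_def[of a] shiftF by (simp add: linstep)
qed

lemma ss_shift: "ss a (Suc k) \<beta> z = - cnj (a 0) * cc (\<lambda>j. a (Suc j)) k \<beta> z + ss (\<lambda>j. a (Suc j)) k \<beta> z"
proof -
  have "step (a 0) z (0,1) = (- cnj (a 0), 1)" by (simp add: step_def)
  then show ?thesis unfolding ss_def[of a] shiftF by (simp add: linstep)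
qed

theorem lemma5p3:
  fixes n :: nat and \<alpha> :: "nat \<Rightarrow> complex" and \<beta> z w :: complex and \<rho>0 :: real
  assumes "n \<ge> 2"
    and "norm \<beta> = 1"
    and "\<forall>j \<le> n - 2. norm (\<alpha> j) < 1"
    and "\<rho>0 = sqrt (1 - (norm (\<alpha> 0))\<^sup>2)"
    and "z \<noteq> w"
  shows "Gm n \<alpha> \<beta> z w =
           z * (complex_of_real \<rho>0)\<^sup>2 * Gm (n - 1) (\<lambda>j. \<alpha> (Suc j)) \<beta> z w
           - \<i> * (complex_of_real \<rho>0)\<^sup>2 * z * poly (Sm (n - 1) (\<lambda>j. \<alpha> (Suc j)) \<beta>) z
               * poly (Cm (n - 1) (\<lambda>j. \<alpha> (Suc j)) \<beta>) w"
proof -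
  obtain k where n: "n = Suc (Suc k)" using assms(1) by (metis add_2_eq_Suc le_Suc_ex)
  have a0: "norm (\<alpha> 0) < 1" using assms(3) by auto
  have "(\<rho>0)\<^sup>2 = 1 - (norm (\<alpha> 0))\<^sup>2"
    using assms(4) a0 by (simp add: abs_square_le_1 less_imp_le)
  then have r: "(complex_of_real \<rho>0)\<^sup>2 = 1 - \<alpha> 0 * cnj (\<alpha> 0)"
    by (metis complex_norm_square of_real_1 of_real_diff of_real_power)
  define b where "b = (\<lambda>j. \<alpha> (Suc j))"
  have zw: "z - w \<noteq> 0" using assms(5) by simp
  show ?thesis
    unfolding n Gm_def r
    apply (simp only: Cm_eval Sm_eval diff_Suc_1 cc_shift ss_shift flip: b_def)
    using zw by (simp add: field_simps)
qed

end
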